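(* Let $B$ be a boolean algebra, $(\mathcal L,i)$ the free frame on ${\sf Filt}(B)$ as in the context, and define $e:B\to\mathfrak B(\mathcal L)$ by $e(b)=i({\uparrow}b)$. Then $e$ is a well-defined injective boolean homomorphism, and the pair $(\mathfrak B(\mathcal L),e)$ is a canonical extension of $B$; that is, $e$ is dense and compact.
   Context: ${\sf Filt}(B)$ is the set of filters of $B$ ordered by reverse inclusion; it is a meet-semilattice with top $\{1\}$ and bottom $B$. Concretely, $\mathcal L$ is the frame of all subsets of the set of proper filters of $B$ that are closed upward under inclusion, ordered by inclusion, and $i(F)=\{G\text{ proper filter}\mid F\subseteq G\}$; $(\mathcal L,i)$ is the free frame on ${\sf Filt}(B)$. For a frame $L$, $a^*=\bigvee\{s\mid a\wedge s=0\}$ and $\mathfrak B(L)=\{a^{**}\mid a\in L\}$ is the booleanization, a complete boolean algebra with meets as in $L$ and joins $(\bigvee S)^{**}$. For a boolean algebra $B$, a complete boolean algebra $C$ and an injective boolean homomorphism $e:B\to C$: $e$ is compact if whenever $S,T\subseteq B$ with $\bigwedge e[S]\le\bigvee e[T]$ there are finite $S_0\subseteq S$, $T_0\subseteq T$ with $\bigwedge S_0\le\bigvee T_0$; $e$ is dense if every element of $C$ is a join of meets of elements of $e[B]$; $(C,e)$ is a canonical extension if $e$ is dense and compact. *)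

theory Defs
  imports Main
begin

definition is_filter :: "'a::boolean_algebra set \<Rightarrow> bool" where
  "is_filter F \<longleftrightarrow> top \<in> F \<and> (\<forall>x\<in>F. \<forall>y. x \<le> y \<longrightarrow> y \<in> F)
                    \<and> (\<forall>x\<in>F. \<forall>y\<in>F. inf x y \<in> F)"

definition proper_filter :: "'a::boolean_algebra set \<Rightarrow> bool" where
  "proper_filter F \<longleftrightarrow> is_filter F \<and> bot \<notin> F"

definition PF :: "'a::boolean_algebra set set" where
  "PF = {F. proper_filter F}"

definition upb :: "'a::boolean_algebra \<Rightarrow> 'a set" where
  "upb b = {x. b \<le> x}"

text \<open>The frame L: upward closed (under inclusion) sets of proper filters, ordered by inclusion.\<close>
definition frameL :: "'a::boolean_algebra set set set" where
  "frameL = {U. U \<subseteq> PF \<and> (\<forall>F\<in>U. \<forall>G\<in>PF. F \<subseteq> G \<longrightarrow> G \<in> U)}"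

definition iL :: "'a::boolean_algebra set \<Rightarrow> 'a set set" where
  "iL F = {G \<in> PF. F \<subseteq> G}"

text \<open>Pseudocomplement in L: joins in L are unions, bottom is the empty set.\<close>
definition pcompl :: "'a::boolean_algebra set set \<Rightarrow> 'a set set" where
  "pcompl U = \<Union>{S \<in> frameL. U \<inter> S = {}}"

definition boolL :: "'a::boolean_algebra set set set" where
  "boolL = {pcompl (pcompl U) | U. U \<in> frameL}"

text \<open>Joins in the booleanization: (\<Union>S)**; meets as in L (top of L is PF).\<close>
definition bjoin :: "'a::boolean_algebra set set set \<Rightarrow> 'a set set" where
  "bjoin Us = pcompl (pcompl (\<Union>Us))"

definition bmeet :: "'a::boolean_algebra set set set \<Rightarrow> 'a set set" where
  "bmeet Us = PF \<inter> \<Inter>Us"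

definition embL :: "'a::boolean_algebra \<Rightarrow> 'a set set" where
  "embL b = iL (upb b)"

definition fin_meet :: "'a::boolean_algebra set \<Rightarrow> 'a" where
  "fin_meet S = Finite_Set.fold inf top S"

definition fin_join :: "'a::boolean_algebra set \<Rightarrow> 'a" where
  "fin_join S = Finite_Set.fold sup bot S"

end

theory Submission
  imports Defs
begin

lemma fm_empty[simp]: "fin_meet {} = (top::'a::boolean_algebra)"
  by (simp add: fin_meet_def)
lemma fj_empty[simp]: "fin_join {} = (bot::'a::boolean_algebra)"
  by (simp add: fin_join_def)

lemma fm_insert[simp]: "finite S \<Longrightarrow> fin_meet (insert x S) = inf x (fin_meet (S::'a::boolean_algebra set))"
proof -
  interpret comp_fun_idem "inf :: 'a \<Rightarrow> 'a \<Rightarrow> 'a" by (fact comp_fun_idem_inf)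
  assume "finite S" then show ?thesis by (simp add: fin_meet_def)
qed

lemma fj_insert[simp]: "finite S \<Longrightarrow> fin_join (insert x S) = sup x (fin_join (S::'a::boolean_algebra set))"
proof -
  interpret comp_fun_idem "sup :: 'a \<Rightarrow> 'a \<Rightarrow> 'a" by (fact comp_fun_idem_sup)
  assume "finite S" then show ?thesis by (simp add: fin_join_def)
qed

lemma fm_union: "finite A \<Longrightarrow> finite B \<Longrightarrow> fin_meet (A \<union> B) = inf (fin_meet A) (fin_meet (B::'a::boolean_algebra set))"
  by (induction A rule: finite_induct) (auto simp: inf_assoc)

lemma fm_uminus: "finite T \<Longrightarrow> fin_meet (uminus ` T) = - fin_join (T::'a::boolean_algebra set)"
  by (induction T rule: finite_induct) auto

lemma fm_single[simp]: "fin_meet {x} = (x::'a::boolean_algebra)"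
  using fm_insert[of "{}" x] by simp

definition gen :: "'a::boolean_algebra set \<Rightarrow> 'a set" where
  "gen X = {y. \<exists>X0. finite X0 \<and> X0 \<subseteq> X \<and> fin_meet X0 \<le> y}"

lemma gen_filter: "is_filter (gen X)"
  unfolding is_filter_def gen_def
proof (intro conjI ballI allI impI)
  show "top \<in> {y. \<exists>X0. finite X0 \<and> X0 \<subseteq> X \<and> fin_meet X0 \<le> y}"
    by (rule CollectI, rule exI[of _ "{}"]) simp
next
  fix x y assume "x \<in> {y. \<exists>X0. finite X0 \<and> X0 \<subseteq> X \<and> fin_meet X0 \<le> y}" "x \<le> y"
  then show "y \<in> {y. \<exists>X0. finite X0 \<and> X0 \<subseteq> X \<and> fin_meet X0 \<le> y}"
    using order_trans by blast
next
  fix x y assume "x \<in> {y. \<exists>X0. finite X0 \<and> X0 \<subseteq> X \<and> fin_meet X0 \<le> y}"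
    "y \<in> {y. \<exists>X0. finite X0 \<and> X0 \<subseteq> X \<and> fin_meet X0 \<le> y}"
  then obtain A B where A: "finite A" "A \<subseteq> X" "fin_meet A \<le> x"
    and B: "finite B" "B \<subseteq> X" "fin_meet B \<le> y" by auto
  have "fin_meet (A \<union> B) \<le> inf x y" using A B by (simp add: fm_union le_infI1 le_infI2)
  then show "inf x y \<in> {y. \<exists>X0. finite X0 \<and> X0 \<subseteq> X \<and> fin_meet X0 \<le> y}"
    using A B by (intro CollectI exI[of _ "A \<union> B"]) auto
qed

lemma gen_sup: "X \<subseteq> gen X"
  unfolding gen_def by (auto intro!: exI[of _ "{x}" for x])

lemma gen_mono: "X \<subseteq> Y \<Longrightarrow> gen X \<subseteq> gen Y"
  unfolding gen_def by blast

lemma filter_up: "is_filter F \<Longrightarrow> x \<in> F \<Longrightarrow> x \<le> y \<Longrightarrow> y \<in> F"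
  unfolding is_filter_def by blast
lemma filter_inf: "is_filter F \<Longrightarrow> x \<in> F \<Longrightarrow> y \<in> F \<Longrightarrow> inf x y \<in> F"
  unfolding is_filter_def by blast
lemma filter_top: "is_filter F \<Longrightarrow> top \<in> F"
  unfolding is_filter_def by blast

lemma embL_char: "embL b = {G \<in> PF. b \<in> G}"
  unfolding embL_def iL_def upb_def PF_def proper_filter_def
  by (auto intro: filter_up)

definition P :: "'a::boolean_algebra set set \<Rightarrow> 'a set set" where
  "P U = {G \<in> PF. \<forall>H\<in>PF. G \<subseteq> H \<longrightarrow> H \<notin> U}"

lemma pcompl_char: "pcompl U = P U"
proof
  show "pcompl U \<subseteq> P U"
    unfolding pcompl_def P_def frameL_def by blast
  have "P U \<in> frameL" unfolding P_def frameL_def by auto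
  moreover have "U \<inter> P U = {}" unfolding P_def by auto
  ultimately show "P U \<subseteq> pcompl U" unfolding pcompl_def by blast
qed

lemma P_in_frameL: "P U \<in> frameL" unfolding P_def frameL_def by auto

lemma P_anti: "U \<subseteq> V \<Longrightarrow> P V \<subseteq> P U" unfolding P_def by blast

lemma P_ext: "U \<in> frameL \<Longrightarrow> U \<subseteq> P (P U)"
  unfolding P_def frameL_def by blast

lemma P3: "U \<in> frameL \<Longrightarrow> P (P (P U)) = P U"
  using P_ext[OF P_in_frameL[of U]] P_anti[OF P_ext[of U]] by blast

lemma P_union: "P (U \<union> V) = P U \<inter> P V" unfolding P_def by blast

lemma PF_upb: "c \<noteq> bot \<Longrightarrow> upb c \<in> PF"
  unfolding PF_def proper_filter_def is_filter_def upb_def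
  by (auto intro: order_trans le_infI) (use bot_unique in blast)

lemma embL_neg: "embL (- a) = P (embL a)"
proof
  show "embL (- a) \<subseteq> P (embL a)"
  proof
    fix G assume "G \<in> embL (- a)"
    hence G: "G \<in> PF" "- a \<in> G" by (auto simp: embL_char)
    { fix H assume H: "H \<in> PF" "G \<subseteq> H" "a \<in> H"
      hence "inf a (- a) \<in> H" using G H filter_inf[of H a "- a"] by (auto simp: PF_def proper_filter_def)
      hence False using H by (simp add: PF_def proper_filter_def) }
    thus "G \<in> P (embL a)" using G by (auto simp: P_def embL_char)
  qed
next
  show "P (embL a) \<subseteq> embL (- a)"
  proof
    fix G assume G: "G \<in> P (embL a)"
    hence GP: "G \<in> PF" and nH: "\<And>H. H \<in> PF \<Longrightarrow> G \<subseteq> H \<Longrightarrow> a \<notin> H"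
      by (auto simp: P_def embL_char)
    have fG: "is_filter G" using GP by (simp add: PF_def proper_filter_def)
    define H where "H = {y. \<exists>g\<in>G. inf g a \<le> y}"
    have fH: "is_filter H" unfolding is_filter_def H_def
    proof (intro conjI ballI allI impI)
      show "top \<in> {y. \<exists>g\<in>G. inf g a \<le> y}" using filter_top[OF fG] by auto
    next
      fix x y assume "x \<in> {y. \<exists>g\<in>G. inf g a \<le> y}" "x \<le> y"
      then show "y \<in> {y. \<exists>g\<in>G. inf g a \<le> y}" using order_trans by blast
    next
      fix x y assume "x \<in> {y. \<exists>g\<in>G. inf g a \<le> y}" "y \<in> {y. \<exists>g\<in>G. inf g a \<le> y}"
      then obtain g1 g2 where "g1 \<in> G" "inf g1 a \<le> x" "g2 \<in> G" "inf g2 a \<le> y" by auto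
      moreover have "inf (inf g1 g2) a \<le> inf x y" using calculation
        by (metis inf.absorb_iff2 inf.bounded_iff inf_le1 inf_le2 inf_left_commute)
      ultimately show "inf x y \<in> {y. \<exists>g\<in>G. inf g a \<le> y}" using filter_inf[OF fG] by blast
    qed
    have GH: "G \<subseteq> H" unfolding H_def using inf_le1 by blast
    have aH: "a \<in> H" unfolding H_def using filter_top[OF fG] by auto
    have "H \<notin> PF" using nH GH aH by blast
    hence "bot \<in> H" using fH by (simp add: PF_def proper_filter_def)
    then obtain g where "g \<in> G" "inf g a \<le> bot" unfolding H_def by auto
    hence "g \<le> - a" using inf_shunt[of g a] bot_unique by blast
    hence "- a \<in> G" using \<open>g \<in> G\<close> filter_up[OF fG] by blast
    thus "G \<in> embL (- a)" using GP by (simp add: embL_char)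
  qed
qed

lemma embL_frameL: "embL b \<in> frameL"
  unfolding frameL_def embL_char PF_def proper_filter_def by auto

lemma embL_reg: "P (P (embL b)) = embL b"
  by (metis embL_neg double_compl)

lemma embL_inf: "embL (inf a b) = embL a \<inter> embL b"
  unfolding embL_char PF_def proper_filter_def
  by (auto intro: filter_inf filter_up)

theorem mainTheorem3:
  shows
    \<comment> \<open>well-defined\<close>
    "(\<forall>b::'a::boolean_algebra. embL b \<in> boolL)
     \<comment> \<open>injective\<close>
     \<and> inj (embL :: 'a \<Rightarrow> 'a set set)
     \<comment> \<open>boolean homomorphism into the booleanization\<close>
     \<and> (\<forall>a b::'a. embL (inf a b) = embL a \<inter> embL b)
     \<and> (\<forall>a b::'a. embL (sup a b) = bjoin {embL a, embL b})
     \<and> (\<forall>a::'a. embL (- a) = pcompl (embL a))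
     \<and> embL (top::'a) = PF
     \<and> embL (bot::'a) = {}
     \<comment> \<open>dense\<close>
     \<and> (\<forall>x\<in>(boolL :: 'a set set set). \<exists>SS :: 'a set set.
            x = bjoin ((\<lambda>S. bmeet (embL ` S)) ` SS))
     \<comment> \<open>compact\<close>
     \<and> (\<forall>S T :: 'a set. bmeet (embL ` S) \<subseteq> bjoin (embL ` T) \<longrightarrow>
          (\<exists>S0 T0. finite S0 \<and> S0 \<subseteq> S \<and> finite T0 \<and> T0 \<subseteq> T
                   \<and> fin_meet S0 \<le> fin_join T0))"
proof (intro conjI allI ballI impI)
  fix b :: 'a
  show "embL b \<in> boolL" unfolding boolL_def pcompl_char
    using embL_reg[of b] embL_frameL[of b] by auto
next
  show "inj (embL :: 'a \<Rightarrow> 'a set set)"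
  proof (rule injI)
    fix a b :: 'a assume eq: "embL a = embL b"
    have *: "x \<le> y" if e: "embL x = embL y" for x y :: 'a
    proof (rule ccontr)
      assume "\<not> x \<le> y"
      hence ne: "inf x (- y) \<noteq> bot" using inf_shunt[of x "- y"] by simp
      have "upb (inf x (- y)) \<in> embL x" using PF_upb[OF ne] by (auto simp: embL_char upb_def)
      hence "upb (inf x (- y)) \<in> embL y" using e by simp
      hence "y \<in> upb (inf x (- y))" by (simp add: embL_char)
      hence "inf x (- y) \<le> y" unfolding upb_def by simp
      hence "inf x (- y) \<le> inf y (- y)" using inf_le2 by (rule le_infI)
      hence "inf x (- y) \<le> bot" by simp
      thus False using ne by (simp add: bot_unique)
    qed
    show "a = b" using *[OF eq] *[OF eq[symmetric]] by (rule antisym)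
  qed
next
  fix a b :: 'a show "embL (inf a b) = embL a \<inter> embL b" by (rule embL_inf)
next
  fix a b :: 'a
  have "bjoin {embL a, embL b} = P (P (embL a) \<inter> P (embL b))"
    by (simp add: bjoin_def pcompl_char P_union)
  also have "\<dots> = P (embL (inf (- a) (- b)))" by (simp add: embL_inf embL_neg)
  also have "\<dots> = embL (sup a b)" by (simp add: embL_neg[symmetric])
  finally show "embL (sup a b) = bjoin {embL a, embL b}" by simp
next
  fix a :: 'a show "embL (- a) = pcompl (embL a)" by (simp add: pcompl_char embL_neg)
next
  show "embL (top::'a) = PF"
    unfolding embL_char PF_def proper_filter_def by (auto intro: filter_top)
next
  show "embL (bot::'a) = {}"
    unfolding embL_char PF_def proper_filter_def by auto
next
  fix x :: "'a set set" assume "x \<in> boolL"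
  then obtain U where U: "U \<in> frameL" "x = P (P U)" unfolding boolL_def pcompl_char by auto
  have xF: "x \<in> frameL" using U P_in_frameL by simp
  have xr: "P (P x) = x" using U P3[OF P_in_frameL[of U]] by simp
  have "(\<Union>S\<in>x. bmeet (embL ` S)) = x"
  proof
    show "(\<Union>S\<in>x. bmeet (embL ` S)) \<subseteq> x"
    proof
      fix G assume "G \<in> (\<Union>S\<in>x. bmeet (embL ` S))"
      then obtain S where "S \<in> x" "G \<in> PF" "\<And>s. s \<in> S \<Longrightarrow> s \<in> G"
        by (auto simp: bmeet_def embL_char)
      thus "G \<in> x" using xF unfolding frameL_def by blast
    qed
    show "x \<subseteq> (\<Union>S\<in>x. bmeet (embL ` S))"
    proof
      fix G assume "G \<in> x"
      hence "G \<in> PF" using xF unfolding frameL_def by blast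
      hence "G \<in> bmeet (embL ` G)" by (auto simp: bmeet_def embL_char)
      thus "G \<in> (\<Union>S\<in>x. bmeet (embL ` S))" using \<open>G \<in> x\<close> by blast
    qed
  qed
  hence "bjoin ((\<lambda>S. bmeet (embL ` S)) ` x) = x"
    unfolding bjoin_def pcompl_char using xr by simp
  thus "\<exists>SS :: 'a set set. x = bjoin ((\<lambda>S. bmeet (embL ` S)) ` SS)" by metis
next
  fix S T :: "'a set"
  assume incl: "bmeet (embL ` S) \<subseteq> bjoin (embL ` T)"
  show "\<exists>S0 T0. finite S0 \<and> S0 \<subseteq> S \<and> finite T0 \<and> T0 \<subseteq> T \<and> fin_meet S0 \<le> fin_join T0"
  proof (rule ccontr)
    assume nex: "\<not> ?thesis"
    define G where "G = gen S"
    define H where "H = gen (S \<union> uminus ` T)"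
    have GP: "G \<in> PF"
    proof -
      { assume "bot \<in> G"
        then obtain S0 where "finite S0" "S0 \<subseteq> S" "fin_meet S0 \<le> bot" unfolding G_def gen_def by auto
        hence False using nex by (metis fj_empty finite.emptyI empty_subsetI) }
      thus ?thesis using gen_filter unfolding G_def PF_def proper_filter_def by auto
    qed
    have HP: "H \<in> PF"
    proof -
      { assume "bot \<in> H"
        then obtain X0 where X0: "finite X0" "X0 \<subseteq> S \<union> uminus ` T" "fin_meet X0 \<le> bot"
          unfolding H_def gen_def by auto
        have "X0 - S \<subseteq> uminus ` T" "finite (X0 - S)" using X0 by auto
        then obtain T0 where T0: "T0 \<subseteq> T" "finite T0" "X0 - S = uminus ` T0"
          using finite_subset_image by metis
        have eqX: "X0 = (X0 \<inter> S) \<union> uminus ` T0" using T0 by blast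
        have "fin_meet X0 = inf (fin_meet (X0 \<inter> S)) (- fin_join T0)"
          by (subst eqX) (simp add: fm_union fm_uminus X0 T0)
        hence "inf (fin_meet (X0 \<inter> S)) (- fin_join T0) = bot" using X0 bot_unique by metis
        hence "fin_meet (X0 \<inter> S) \<le> fin_join T0" using inf_shunt[of "fin_meet (X0 \<inter> S)" "- fin_join T0"] by simp
        hence False using nex X0 T0 by blast }
      thus ?thesis using gen_filter unfolding H_def PF_def proper_filter_def by auto
    qed
    have "G \<in> bmeet (embL ` S)" using GP gen_sup[of S]
      by (auto simp: bmeet_def embL_char G_def)
    hence "G \<in> P (P (\<Union>(embL ` T)))" using incl by (auto simp: bjoin_def pcompl_char)
    moreover have "G \<subseteq> H" unfolding G_def H_def by (rule gen_mono) auto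
    ultimately have "H \<notin> P (\<Union>(embL ` T))" using HP unfolding P_def by blast
    then obtain K t where K: "K \<in> PF" "H \<subseteq> K" "t \<in> T" "t \<in> K"
      using HP unfolding P_def by (auto simp: embL_char)
    have "- t \<in> K" using K gen_sup[of "S \<union> uminus ` T"] unfolding H_def by auto
    hence "inf t (- t) \<in> K" using K filter_inf[of K t "- t"] by (auto simp: PF_def proper_filter_def)
    thus False using K by (simp add: PF_def proper_filter_def)
  qed
qed

end
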